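(* Let $F\colon\Omega\to\Omega$ be a piecewise translation in $\mathbb{R}^d$ with $m=d+1$ branches whose translation vectors $v_0,\dots,v_d$ have the property that any $d$ of them are linearly independent. Then for every $x\in\Omega$ and every $j\in\{0,\dots,d\}$ the set $\{n\ge0 : i(F^n(x))=j\}$ is infinite.
   Context: A region is a compact subset of $\mathbb{R}^d$ which equals the closure of its interior. A piecewise translation with $m$ branches: $\Omega\subset\mathbb{R}^d$ is a region, $\Omega=P_0\cup\dots\cup P_{m-1}$ with each $P_i$ a region, distinct $P_i$ intersecting only in boundaries, $\mathrm{Leb}(\partial P_i)=0$; vectors $v_i$ satisfy $x+v_i\in\Omega$ for $x\in P_i$; $i(x)$ is an index with $x\in P_{i(x)}$ (boundary ambiguity resolved by a fixed measurable rule), and $F(x)=x+v_{i(x)}$. *)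

theory Defs
  imports "HOL-Analysis.Analysis"
begin

definition region :: "'a::euclidean_space set \<Rightarrow> bool" where
  "region S \<longleftrightarrow> compact S \<and> closure (interior S) = S"

definition piecewise_translation ::
  "'a::euclidean_space set \<Rightarrow> nat \<Rightarrow> (nat \<Rightarrow> 'a set) \<Rightarrow> (nat \<Rightarrow> 'a) \<Rightarrow> ('a \<Rightarrow> nat) \<Rightarrow> bool" where
  "piecewise_translation \<Omega> m P v idx \<longleftrightarrow>
     region \<Omega> \<and>
     \<Omega> = (\<Union>i<m. P i) \<and>
     (\<forall>i<m. region (P i)) \<and>
     (\<forall>i<m. \<forall>j<m. i \<noteq> j \<longrightarrow> P i \<inter> P j \<subseteq> frontier (P i) \<inter> frontier (P j)) \<and>
     (\<forall>i<m. frontier (P i) \<in> null_sets lebesgue) \<and>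
     (\<forall>i<m. \<forall>x\<in>P i. x + v i \<in> \<Omega>) \<and>
     (\<forall>x\<in>\<Omega>. idx x < m \<and> x \<in> P (idx x)) \<and>
     idx \<in> measurable lebesgue (count_space UNIV)"

definition pt_map :: "(nat \<Rightarrow> 'a::euclidean_space) \<Rightarrow> ('a \<Rightarrow> nat) \<Rightarrow> 'a \<Rightarrow> 'a" where
  "pt_map v idx x = x + v (idx x)"

end

theory Submission
  imports Defs
begin

theorem proposition2p4:
  fixes \<Omega> :: "'a::euclidean_space set" and P :: "nat \<Rightarrow> 'a set"
    and v :: "nat \<Rightarrow> 'a" and idx :: "'a \<Rightarrow> nat"
  assumes pt: "piecewise_translation \<Omega> (DIM('a) + 1) P v idx"
    and indep: "\<forall>k\<le>DIM('a). inj_on v ({0..DIM('a)} - {k})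
                   \<and> independent (v ` ({0..DIM('a)} - {k}))"
    and x: "x \<in> \<Omega>"
    and j: "j \<le> DIM('a)"
  shows "infinite {n::nat. idx ((pt_map v idx ^^ n) x) = j}"
proof
  define F where "F = pt_map v idx"
  define S where "S = {n::nat. idx ((pt_map v idx ^^ n) x) = j}"
  assume fin: "finite S"
  have inv: "F y \<in> \<Omega> \<and> idx y \<le> DIM('a)" if y: "y \<in> \<Omega>" for y
  proof -
    have a: "\<forall>x\<in>\<Omega>. idx x < DIM('a) + 1 \<and> x \<in> P (idx x)" "\<forall>i<DIM('a) + 1. \<forall>x\<in>P i. x + v i \<in> \<Omega>"
      using pt unfolding piecewise_translation_def by blast+
    from a(1) y have "idx y < DIM('a) + 1" "y \<in> P (idx y)" by blast+
    with a(2) show ?thesis unfolding F_def pt_map_def by simp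
  qed
  have orb: "(F ^^ n) x \<in> \<Omega>" for n
    by (induction n) (use x inv in auto)
  have ind: "independent (v ` ({0..DIM('a)} - {j}))" using indep j by blast
  obtain g :: "'a \<Rightarrow> real" where g: "linear g" "\<forall>y\<in>v ` ({0..DIM('a)} - {j}). g y = 1"
    using real_vector.linear_independent_extend[OF ind, of "\<lambda>_. 1"] by blast
  have bl: "bounded_linear g" using g(1) linear_conv_bounded_linear by blast
  then obtain K where K: "\<And>y. norm (g y) \<le> norm y * K" and Kp: "K > 0"
    using bounded_linear.pos_bounded by blast
  have cpt: "compact \<Omega>" using pt unfolding piecewise_translation_def region_def by auto
  then obtain R where R: "\<And>y. y \<in> \<Omega> \<Longrightarrow> norm y \<le> R"
    using compact_imp_bounded bounded_iff by metis
  obtain N where N: "\<And>n. n \<ge> N \<Longrightarrow> n \<notin> S"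
  proof -
    obtain k where "S \<subseteq> {..<k}" using fin finite_nat_bounded by blast
    hence "\<And>n. k \<le> n \<Longrightarrow> n \<notin> S" by auto
    thus ?thesis using that by blast
  qed
  have step: "g ((F ^^ Suc n) x) = g ((F ^^ n) x) + 1" if "n \<ge> N" for n
  proof -
    have "idx ((F ^^ n) x) \<noteq> j" using N[OF that] unfolding S_def F_def by simp
    moreover have "idx ((F ^^ n) x) \<le> DIM('a)" using inv orb by blast
    ultimately have "g (v (idx ((F ^^ n) x))) = 1" using g(2) by auto
    thus ?thesis using linear_add[OF g(1)] by (simp add: F_def pt_map_def)
  qed
  have lin: "g ((F ^^ (N + k)) x) = g ((F ^^ N) x) + real k" for k
  proof (induction k)
    case 0 thus ?case by simp
  next
    case (Suc k)
    have "(F ^^ (N + Suc k)) x = (F ^^ Suc (N + k)) x" by simp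
    thus ?case using step[of "N + k"] Suc by simp
  qed
  have bd: "\<bar>g y\<bar> \<le> R * K" if "y \<in> \<Omega>" for y
  proof -
    have "\<bar>g y\<bar> \<le> norm y * K" using K[of y] by simp
    also have "\<dots> \<le> R * K"
      using R[OF that] Kp by (simp add: mult_right_mono)
    finally show ?thesis .
  qed
  obtain k :: nat where k: "real k > 2 * R * K + 1" using reals_Archimedean2 by blast
  have "\<bar>g ((F ^^ (N + k)) x)\<bar> \<le> R * K" "\<bar>g ((F ^^ N) x)\<bar> \<le> R * K"
    using bd orb by blast+
  thus False using lin[of k] k by linarith
qed

end
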